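(* Let $q$ be a prime power, $3\le n\le q$, and let $\boldsymbol\alpha=(\alpha_1,\dots,\alpha_n)$ consist of pairwise distinct elements of $\mathbb F_q$. The Reed–Solomon code $\mathrm{RS}_{\boldsymbol\alpha}(n,2)$ has insdel distance $2n-4$ if and only if the following holds: for every $\mathbf i=(i_1,i_2,i_3),\mathbf j=(j_1,j_2,j_3)\in S_3(n)$ with $d_H(\mathbf i,\mathbf j)\ge 2$, there is no pair $(a,b)\in\mathbb F_q^*\times\mathbb F_q$ with $a\alpha_{i_\ell}+b=\alpha_{j_\ell}$ for all $\ell=1,2,3$.
   Context: $\mathrm{RS}_{\boldsymbol\alpha}(n,k)=\{(f(\alpha_1),\dots,f(\alpha_n)): f\in\mathbb F_q[x],\ \deg f<k\}$. $S_3(n)=\{(i_1,i_2,i_3)\in\{1,\dots,n\}^3: i_1<i_2<i_3\}$, and $d_H(\mathbf i,\mathbf j)$ is the number of coordinates in which $\mathbf i$ and $\mathbf j$ differ. For $\mathbf u,\mathbf v\in\mathbb F_q^n$, the insdel distance $d_I(\mathbf u,\mathbf v)$ is the minimum number of insertions and deletions transforming $\mathbf u$ into $\mathbf v$; equivalently $2n-2\ell_{\rm LCS}(\mathbf u,\mathbf v)$ with $\ell_{\rm LCS}$ the length of a longest common subsequence. The insdel distance of a code is the minimum over distinct codewords. *)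

theory Defs
  imports "HOL-Computational_Algebra.Polynomial" "HOL-Library.Sublist"
begin

(* Reed-Solomon code RS_alpha(n,k), evaluation points alpha 1, ..., alpha n (1-based),
   codewords represented as lists of length n *)
definition RS_code :: "(nat \<Rightarrow> 'a::field) \<Rightarrow> nat \<Rightarrow> nat \<Rightarrow> 'a list set" where
  "RS_code \<alpha> n k = {map (\<lambda>i. poly f (\<alpha> i)) [1..<n+1] | f. degree f < k}"

definition lcs_len :: "'a list \<Rightarrow> 'a list \<Rightarrow> nat" where
  "lcs_len u v = Max {length w | w. subseq w u \<and> subseq w v}"

definition insdel_dist :: "'a list \<Rightarrow> 'a list \<Rightarrow> nat" where
  "insdel_dist u v = length u + length v - 2 * lcs_len u v"

definition code_insdel_dist :: "'a list set \<Rightarrow> nat" where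
  "code_insdel_dist C = Min {insdel_dist u v | u v. u \<in> C \<and> v \<in> C \<and> u \<noteq> v}"

definition S3 :: "nat \<Rightarrow> (nat \<times> nat \<times> nat) set" where
  "S3 n = {(i1, i2, i3). 1 \<le> i1 \<and> i1 < i2 \<and> i2 < i3 \<and> i3 \<le> n}"

definition dH3 :: "nat \<times> nat \<times> nat \<Rightarrow> nat \<times> nat \<times> nat \<Rightarrow> nat" where
  "dH3 i j = (case i of (i1, i2, i3) \<Rightarrow> case j of (j1, j2, j3) \<Rightarrow>
     (if i1 \<noteq> j1 then 1 else 0) + (if i2 \<noteq> j2 then 1 else 0) + (if i3 \<noteq> j3 then 1 else 0))"

end

theory Submission
  imports Defs
begin

lemma sub_upt_D:
  "subseq (a#w) (map h [l..<m]) \<Longrightarrow> \<exists>i. l \<le> i \<and> i < m \<and> a = h i \<and> subseq w (map h [Suc i..<m])"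
proof (induction "m - l" arbitrary: l)
  case 0 then show ?case by simp
next
  case (Suc k)
  then have lm: "l < m" by simp
  have e: "map h [l..<m] = h l # map h [Suc l..<m]" using lm by (simp add: upt_conv_Cons)
  show ?case
  proof (cases "a = h l")
    case True then show ?thesis using Suc.prems lm e by (auto intro!: exI[of _ l])
  next
    case False
    then have "subseq (a#w) (map h [Suc l..<m])" using Suc.prems e by simp
    moreover have "k = m - Suc l" using Suc.hyps(2) by simp
    ultimately obtain i where
      "Suc l \<le> i \<and> i < m \<and> a = h i \<and> subseq w (map h [Suc i..<m])" using Suc.hyps(1)[of "Suc l"] by blast
    then show ?thesis by (auto intro!: exI[of _ i])
  qed
qed

lemma sub_upt_I:
  "l \<le> i \<Longrightarrow> i < m \<Longrightarrow> subseq w (map h [Suc i..<m]) \<Longrightarrow> subseq (h i # w) (map h [l..<m])"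
proof (induction "m - l" arbitrary: l)
  case 0 then show ?case by simp
next
  case (Suc k)
  then have lm: "l < m" by simp
  have e: "map h [l..<m] = h l # map h [Suc l..<m]" using lm by (simp add: upt_conv_Cons)
  show ?case
  proof (cases "i = l")
    case True then show ?thesis using Suc.prems e by simp
  next
    case False
    have "k = m - Suc l" using Suc.hyps(2) by simp
    then have "subseq (h i # w) (map h [Suc l..<m])" using Suc.hyps(1)[of "Suc l"] Suc.prems False by simp
    then show ?thesis unfolding e by (rule list_emb_Cons)
  qed
qed

lemma sub3_D:
  assumes "subseq [x,y,z] (map h [1..<n+1])"
  shows "\<exists>i1 i2 i3. (i1,i2,i3) \<in> S3 n \<and> x = h i1 \<and> y = h i2 \<and> z = h i3"
proof -
  from sub_upt_D[OF assms] obtain i1 where i1: "1 \<le> i1" "i1 < n+1" "x = h i1"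
    "subseq [y,z] (map h [Suc i1..<n+1])" by auto
  from sub_upt_D[OF i1(4)] obtain i2 where i2: "Suc i1 \<le> i2" "i2 < n+1" "y = h i2"
    "subseq [z] (map h [Suc i2..<n+1])" by auto
  from sub_upt_D[OF i2(4)] obtain i3 where i3: "Suc i2 \<le> i3" "i3 < n+1" "z = h i3" by auto
  show ?thesis using i1 i2 i3 by (intro exI[of _ i1] exI[of _ i2] exI[of _ i3]) (auto simp: S3_def)
qed

lemma deg1: "degree (f::'a::field poly) < 2 \<Longrightarrow> poly f x = coeff f 1 * x + coeff f 0"
proof -
  assume "degree f < 2"
  then have "degree f \<le> 1" by simp
  from poly_as_sum_of_monoms'[OF this] have "f = (\<Sum>i\<le>1. monom (coeff f i) i)" by simp
  then have "poly f x = poly (\<Sum>i\<le>1. monom (coeff f i) i) x" by simp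
  also have "\<dots> = coeff f 1 * x + coeff f 0" by (simp add: poly_sum poly_monom)
  finally show ?thesis .
qed

lemma RS2: "RS_code \<alpha> n 2 = {map (\<lambda>i. c * \<alpha> i + d) [1..<n+1] | c d. True}"
proof -
  have "\<exists>f. degree f < 2 \<and> map (\<lambda>i. c * \<alpha> i + d) [1..<n+1] = map (\<lambda>i. poly f (\<alpha> i)) [1..<n+1]" for c d
    by (rule exI[of _ "[:d, c:]"]) (auto simp: algebra_simps)
  then show ?thesis unfolding RS_code_def using deg1 by fastforce
qed


lemma sub3_I:
  assumes "1 \<le> i1" "i1 < i2" "i2 < i3" "i3 \<le> n"
  shows "subseq [h i1, h i2, h i3] (map h [1..<n+1])"
proof -
  have "subseq [h i3] (map h [Suc i2..<n+1])" using assms by (intro sub_upt_I) auto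
  then have "subseq [h i2, h i3] (map h [Suc i1..<n+1])" using assms by (intro sub_upt_I) auto
  then show ?thesis using assms by (intro sub_upt_I) auto
qed

lemma take_sub: "subseq (take k w) w"
  using subseq_append'[of "take k w" "[]" "drop k w"] by simp

lemma alg2:
  fixes p p' c1 d1 c2 d2 :: "'a::field"
  assumes "p \<noteq> p'" "c1 * p + d1 = c2 * p + d2" "c1 * p' + d1 = c2 * p' + d2"
  shows "c1 = c2 \<and> d1 = d2"
proof -
  have "(c1 * p + d1) - (c1 * p' + d1) = (c2 * p + d2) - (c2 * p' + d2)" using assms(2,3) by simp
  then have "(c1 - c2) * (p - p') = 0" by (simp add: algebra_simps)
  then have "c1 = c2" using assms(1) by simp
  then show ?thesis using assms(2) by simp
qed

lemma alg_const:
  fixes q q' c2 d1 d2 :: "'a::field"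
  assumes "q \<noteq> q'" "d1 = c2 * q + d2" "d1 = c2 * q' + d2"
  shows "c2 = 0 \<and> d1 = d2"
  using alg2[of q q' 0 d1 c2 d2] assms by auto

theorem lemma4p6:
  fixes \<alpha> :: "nat \<Rightarrow> 'a::{finite, field}" and n :: nat
  assumes "3 \<le> n" and "n \<le> card (UNIV :: 'a set)"
    and "inj_on \<alpha> {1..n}"
  shows "code_insdel_dist (RS_code \<alpha> n 2) = 2 * n - 4 \<longleftrightarrow>
    (\<forall>i\<in>S3 n. \<forall>j\<in>S3 n. dH3 i j \<ge> 2 \<longrightarrow>
       \<not> (\<exists>a b. a \<noteq> 0 \<and>
              a * \<alpha> (fst i) + b = \<alpha> (fst j) \<and>
              a * \<alpha> (fst (snd i)) + b = \<alpha> (fst (snd j)) \<and>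
              a * \<alpha> (snd (snd i)) + b = \<alpha> (snd (snd j))))"
    (is "?L \<longleftrightarrow> ?R")
proof -
  define cw where "cw c d = map (\<lambda>i. c * \<alpha> i + d) [1..<n+1]" for c d
  define C where "C = RS_code \<alpha> n 2"
  have C: "C = {cw c d |c d. True}" unfolding C_def cw_def by (rule RS2)
  have len: "length (cw c d) = n" for c d by (simp add: cw_def)
  have nth: "cw c d ! (k - 1) = c * \<alpha> k + d" if "1 \<le> k" "k \<le> n" for c d k
  proof -
    have "[Suc 0..<Suc n] ! (k - Suc 0) = k" using that by (subst nth_upt) auto
    then show ?thesis using that by (simp add: cw_def del: upt_Suc)
  qed
  have injD: "\<alpha> x = \<alpha> y \<Longrightarrow> x \<in> {1..n} \<Longrightarrow> y \<in> {1..n} \<Longrightarrow> x = y" for x y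
    using assms(3) by (auto dest: inj_onD)
  define LS where "LS u v = {length w | w. subseq w u \<and> subseq w v}" for u v :: "'a list"
  have LSfin: "finite (LS (cw c d) (cw c' d'))" for c d c' d'
  proof -
    have "LS (cw c d) (cw c' d') \<subseteq> {..n}" unfolding LS_def using list_emb_length len by fastforce
    then show ?thesis by (rule finite_subset) simp
  qed
  have lcs_ge: "lcs_len (cw c d) (cw c' d') \<ge> length w" if "subseq w (cw c d)" "subseq w (cw c' d')" for w c d c' d'
    unfolding lcs_len_def using LSfin[of c d c' d'] that by (intro Max_ge) (auto simp: LS_def)
  have ins: "insdel_dist (cw c d) (cw c' d') = n + n - 2 * lcs_len (cw c d) (cw c' d')" for c d c' d'
    by (simp add: insdel_dist_def len)
  define D where "D = {insdel_dist u v | u v. u \<in> C \<and> v \<in> C \<and> u \<noteq> v}"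
  have Dfin: "finite D"
  proof -
    have "D \<subseteq> {..2*n}" unfolding D_def C by (auto simp: ins)
    then show ?thesis by (rule finite_subset) simp
  qed
  have Ldef: "code_insdel_dist (RS_code \<alpha> n 2) = Min D" unfolding code_insdel_dist_def D_def C_def ..
  show ?thesis
  proof
    assume L: ?L
    show ?R
    proof (rule ccontr)
      assume "\<not> ?R"
      then obtain i1 i2 i3 j1 j2 j3 a b where i: "(i1,i2,i3) \<in> S3 n" and j: "(j1,j2,j3) \<in> S3 n"
        and dh: "dH3 (i1,i2,i3) (j1,j2,j3) \<ge> 2" and a: "a \<noteq> 0"
        and e1: "a * \<alpha> i1 + b = \<alpha> j1" and e2: "a * \<alpha> i2 + b = \<alpha> j2" and e3: "a * \<alpha> i3 + b = \<alpha> j3"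
        by auto
      have s1: "subseq [\<alpha> j1, \<alpha> j2, \<alpha> j3] (cw a b)"
        using sub3_I[of i1 i2 i3 n "\<lambda>i. a * \<alpha> i + b"] i e1 e2 e3 by (simp add: S3_def cw_def)
      have s2: "subseq [\<alpha> j1, \<alpha> j2, \<alpha> j3] (cw 1 0)"
        using sub3_I[of j1 j2 j3 n "\<lambda>i. 1 * \<alpha> i + 0"] j by (simp add: S3_def cw_def)
      have ne: "cw a b \<noteq> cw 1 0"
      proof
        assume eq: "cw a b = cw 1 0"
        have "a * \<alpha> k + b = \<alpha> k" if "1 \<le> k" "k \<le> n" for k
          using nth[OF that, of a b] nth[OF that, of 1 0] eq by simp
        then have "\<alpha> i1 = \<alpha> j1" "\<alpha> i2 = \<alpha> j2" "\<alpha> i3 = \<alpha> j3" using i e1 e2 e3 by (auto simp: S3_def)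
        then have "i1 = j1" "i2 = j2" "i3 = j3" using i j by (auto simp: S3_def intro: injD)
        then show False using dh by (simp add: dH3_def)
      qed
      have "lcs_len (cw a b) (cw 1 0) \<ge> 3" using lcs_ge[OF s1 s2] by simp
      then have le: "insdel_dist (cw a b) (cw 1 0) \<le> 2 * n - 6" by (simp add: ins)
      have "insdel_dist (cw a b) (cw 1 0) \<in> D" unfolding D_def C using ne by blast
      then have "Min D \<le> 2 * n - 6" using Dfin le by (meson Min_le order_trans)
      then show False using L Ldef assms(1) by simp
    qed
  next
    assume R: ?R
    have short: "length w \<le> 2" if ne: "cw c1 d1 \<noteq> cw c2 d2" and w1: "subseq w (cw c1 d1)"
      and w2: "subseq w (cw c2 d2)" for w c1 d1 c2 d2
    proof (rule ccontr)
      assume "\<not> length w \<le> 2"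
      then obtain x w1 where w1: "w = x # w1" by (cases w) auto
      with \<open>\<not> length w \<le> 2\<close> obtain y w2 where w2: "w1 = y # w2" by (cases w1) auto
      with w1 \<open>\<not> length w \<le> 2\<close> obtain z w3 where w3: "w2 = z # w3" by (cases w2) auto
      have t: "take 3 w = [x,y,z]" using w1 w2 w3 by (simp add: numeral_3_eq_3)
      have t1: "subseq [x,y,z] (cw c1 d1)" using subseq_order.trans[OF take_sub[of 3 w] \<open>subseq w (cw c1 d1)\<close>] t by simp
      have t2: "subseq [x,y,z] (cw c2 d2)" using subseq_order.trans[OF take_sub[of 3 w] \<open>subseq w (cw c2 d2)\<close>] t by simp
      obtain i1 i2 i3 where i: "(i1,i2,i3) \<in> S3 n" and xi: "x = c1 * \<alpha> i1 + d1" "y = c1 * \<alpha> i2 + d1" "z = c1 * \<alpha> i3 + d1"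
        using sub3_D[OF t1[unfolded cw_def]] by auto
      obtain j1 j2 j3 where j: "(j1,j2,j3) \<in> S3 n" and xj: "x = c2 * \<alpha> j1 + d2" "y = c2 * \<alpha> j2 + d2" "z = c2 * \<alpha> j3 + d2"
        using sub3_D[OF t2[unfolded cw_def]] by auto
      have pd: "\<alpha> i1 \<noteq> \<alpha> i2" "\<alpha> i1 \<noteq> \<alpha> i3" "\<alpha> i2 \<noteq> \<alpha> i3"
        using i injD[of i1 i2] injD[of i1 i3] injD[of i2 i3] by (auto simp: S3_def)
      have qd: "\<alpha> j1 \<noteq> \<alpha> j2" "\<alpha> j1 \<noteq> \<alpha> j3" "\<alpha> j2 \<noteq> \<alpha> j3"
        using j injD[of j1 j2] injD[of j1 j3] injD[of j2 j3] by (auto simp: S3_def)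
      have cdne: "\<not> (c1 = c2 \<and> d1 = d2)" using ne by auto
      have c1: "c1 \<noteq> 0"
      proof
        assume h: "c1 = 0"
        have "d1 = c2 * \<alpha> j1 + d2" "d1 = c2 * \<alpha> j2 + d2" using xi xj h by simp_all
        from alg_const[OF qd(1) this] show False using h cdne by simp
      qed
      have c2: "c2 \<noteq> 0"
      proof
        assume h: "c2 = 0"
        have "d2 = c1 * \<alpha> i1 + d1" "d2 = c1 * \<alpha> i2 + d1" using xi xj h by simp_all
        from alg_const[OF pd(1) this] show False using h cdne by simp
      qed
      define a where "a = c1 / c2"
      define b where "b = (d1 - d2) / c2"
      have ab: "a * \<alpha> k + b = \<alpha> l" if "c1 * \<alpha> k + d1 = c2 * \<alpha> l + d2" for k l
      proof -
        have "c2 * (a * \<alpha> k + b) = c1 * \<alpha> k + d1 - d2" using c2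
          by (simp add: a_def b_def distrib_left)
        also have "\<dots> = c2 * \<alpha> l" using that by simp
        finally show ?thesis using c2 by simp
      qed
      have a0: "a \<noteq> 0" using c1 c2 by (simp add: a_def)
      have dh: "dH3 (i1,i2,i3) (j1,j2,j3) \<ge> 2"
      proof (rule ccontr)
        assume "\<not> ?thesis"
        then have "(i1 = j1 \<and> i2 = j2) \<or> (i1 = j1 \<and> i3 = j3) \<or> (i2 = j2 \<and> i3 = j3)"
          by (simp add: dH3_def split: if_splits)
        then show False
        proof (elim disjE conjE)
          assume "i1 = j1" "i2 = j2"
          then show False using alg2[OF pd(1), of c1 d1 c2 d2] xi xj cdne by simp
        next
          assume "i1 = j1" "i3 = j3"
          then show False using alg2[OF pd(2), of c1 d1 c2 d2] xi xj cdne by simp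
        next
          assume "i2 = j2" "i3 = j3"
          then show False using alg2[OF pd(3), of c1 d1 c2 d2] xi xj cdne by simp
        qed
      qed
      have "a * \<alpha> i1 + b = \<alpha> j1" using ab[of i1 j1] xi(1) xj(1) by simp
      moreover have "a * \<alpha> i2 + b = \<alpha> j2" using ab[of i2 j2] xi(2) xj(2) by simp
      moreover have "a * \<alpha> i3 + b = \<alpha> j3" using ab[of i3 j3] xi(3) xj(3) by simp
      moreover have "\<not> (\<exists>a b. a \<noteq> 0 \<and> a * \<alpha> i1 + b = \<alpha> j1 \<and> a * \<alpha> i2 + b = \<alpha> j2 \<and> a * \<alpha> i3 + b = \<alpha> j3)"
        using bspec[OF bspec[OF R i] j] dh by simp
      ultimately show False using a0 by blast
    qed
    have lcs_le: "lcs_len (cw c1 d1) (cw c2 d2) \<le> 2" if "cw c1 d1 \<noteq> cw c2 d2" for c1 d1 c2 d2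
    proof -
      have "LS (cw c1 d1) (cw c2 d2) \<noteq> {}" unfolding LS_def by (auto intro!: exI[of _ "[]"])
      then show ?thesis unfolding lcs_len_def LS_def[symmetric]
        using LSfin[of c1 d1 c2 d2] short[OF that] by (subst Max_le_iff) (auto simp: LS_def)
    qed
    have lower: "x \<ge> 2 * n - 4" if "x \<in> D" for x
      using that unfolding D_def C by (auto simp: ins dest!: lcs_le)
    define c where "c = (\<alpha> 3 - \<alpha> 2) / (\<alpha> 2 - \<alpha> 1)"
    define d where "d = \<alpha> 2 - c * \<alpha> 1"
    have a12: "\<alpha> 2 - \<alpha> 1 \<noteq> 0" using assms(1) injD[of 2 1] by auto
    have v1: "c * \<alpha> 1 + d = \<alpha> 2" by (simp add: d_def)
    have v2: "c * \<alpha> 2 + d = \<alpha> 3"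
    proof -
      have "c * \<alpha> 2 + d = c * (\<alpha> 2 - \<alpha> 1) + \<alpha> 2" by (simp add: d_def algebra_simps)
      also have "\<dots> = \<alpha> 3" using a12 by (simp add: c_def)
      finally show ?thesis .
    qed
    have s1: "subseq [\<alpha> 2, \<alpha> 3] (cw 1 0)"
    proof -
      have "subseq [(\<lambda>i. 1 * \<alpha> i + 0) 3] (map (\<lambda>i. 1 * \<alpha> i + 0) [Suc 2..<n+1])"
        using assms(1) by (intro sub_upt_I) auto
      then have "subseq [(\<lambda>i. 1 * \<alpha> i + 0) 2, (\<lambda>i. 1 * \<alpha> i + 0) 3] (map (\<lambda>i. 1 * \<alpha> i + 0) [1..<n+1])"
        using assms(1) by (intro sub_upt_I) auto
      then show ?thesis by (simp add: cw_def)
    qed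
    have s2: "subseq [\<alpha> 2, \<alpha> 3] (cw c d)"
    proof -
      have "subseq [(\<lambda>i. c * \<alpha> i + d) 2] (map (\<lambda>i. c * \<alpha> i + d) [Suc 1..<n+1])"
        using assms(1) by (intro sub_upt_I) auto
      then have "subseq [(\<lambda>i. c * \<alpha> i + d) 1, (\<lambda>i. c * \<alpha> i + d) 2] (map (\<lambda>i. c * \<alpha> i + d) [1..<n+1])"
        using assms(1) by (intro sub_upt_I) auto
      then show ?thesis using v1 v2 by (simp add: cw_def)
    qed
    have ne: "cw 1 0 \<noteq> cw c d"
    proof
      assume "cw 1 0 = cw c d"
      then have "cw 1 0 ! (1 - 1) = cw c d ! (1 - 1)" by simp
      then show False using nth[of 1 1 0] nth[of 1 c d] assms(1) v1 a12 by simp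
    qed
    have "lcs_len (cw 1 0) (cw c d) = 2" using lcs_ge[OF s1 s2] lcs_le[OF ne] by simp
    then have e4: "insdel_dist (cw 1 0) (cw c d) = 2 * n - 4" by (simp add: ins)
    have "insdel_dist (cw 1 0) (cw c d) \<in> D" unfolding D_def C using ne by blast
    then have mem: "2 * n - 4 \<in> D" using e4 by simp
    have "Min D = 2 * n - 4" using Dfin mem lower by (intro Min_eqI) auto
    then show ?L using Ldef by simp
  qed
qed

end
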